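(* There exist absolute constants $c_1,c_2>0$ such that for every sufficiently large $n$ there exists a monotone non-negative $\frac{c_1}{n}$-Lipschitz submodular function $f\colon\mathbb F_2^n\to[0,1]$ (a rescaled matroid rank function) with $R^{\to}_{1/3}(f^+)\ge c_2 n$.
   Context: Functions $f\colon 2^{[n]}\to\mathbb R$ are identified with functions on $\mathbb F_2^n$ via $x\leftrightarrow\{i:x_i=1\}$. $f$ is monotone if $f(A)\le f(B)$ for $A\subseteq B$; $\alpha$-Lipschitz if $|f(S\cup\{i\})-f(S)|\le\alpha$ for all $S$, $i$; submodular if $f(A\cup\{i\})-f(A)\ge f(B\cup\{i\})-f(B)$ for all $A\subseteq B\subseteq[n]$, $i\notin B$. The XOR-function of $f$ is $f^+(x,y)=f(x+y)$ (coordinatewise addition mod 2). Randomized one-way communication complexity: $R^{\to}_\delta(f^+)$ is the minimum, over public-coin randomized protocols in which Alice (holding $x\in\mathbb F_2^n$) sends a single message to Bob (holding $y\in\mathbb F_2^n$) who then outputs a value, such that for every $x,y$ Bob's output equals $f^+(x,y)$ with probability at least $1-\delta$, of the maximum message length in bits. *)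

theory Defs
  imports "HOL-Probability.Probability"
begin

text \<open>Vectors of F_2^n are identified with subsets of {..<n}; coordinatewise
addition mod 2 is symmetric difference.\<close>

definition xor_set :: "nat set \<Rightarrow> nat set \<Rightarrow> nat set" where
  "xor_set x y = (x - y) \<union> (y - x)"

definition monotone_setfun :: "nat \<Rightarrow> (nat set \<Rightarrow> real) \<Rightarrow> bool" where
  "monotone_setfun n f \<longleftrightarrow> (\<forall>A B. A \<subseteq> B \<and> B \<subseteq> {..<n} \<longrightarrow> f A \<le> f B)"

definition lipschitz_setfun :: "nat \<Rightarrow> real \<Rightarrow> (nat set \<Rightarrow> real) \<Rightarrow> bool" where
  "lipschitz_setfun n \<alpha> f \<longleftrightarrow>
     (\<forall>S i. S \<subseteq> {..<n} \<and> i < n \<longrightarrow> \<bar>f (insert i S) - f S\<bar> \<le> \<alpha>)"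

definition submodular_setfun :: "nat \<Rightarrow> (nat set \<Rightarrow> real) \<Rightarrow> bool" where
  "submodular_setfun n f \<longleftrightarrow>
     (\<forall>A B i. A \<subseteq> B \<and> B \<subseteq> {..<n} \<and> i < n \<and> i \<notin> B \<longrightarrow>
        f (insert i A) - f A \<ge> f (insert i B) - f B)"

definition is_matroid :: "nat \<Rightarrow> nat set set \<Rightarrow> bool" where
  "is_matroid n I \<longleftrightarrow>
     (\<forall>J\<in>I. J \<subseteq> {..<n}) \<and> {} \<in> I \<and>
     (\<forall>J K. J \<in> I \<and> K \<subseteq> J \<longrightarrow> K \<in> I) \<and>
     (\<forall>J K. J \<in> I \<and> K \<in> I \<and> card J < card K \<longrightarrow> (\<exists>e\<in>K - J. insert e J \<in> I))"

definition matroid_rank :: "nat set set \<Rightarrow> nat set \<Rightarrow> nat" where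
  "matroid_rank I S = Max {card J | J. J \<subseteq> S \<and> J \<in> I}"

text \<open>A public-coin
protocol is a probability distribution over deterministic one-way protocols
(a message function for Alice and an output function for Bob).\<close>

type_synonym det_oneway = "(nat set \<Rightarrow> bool list) \<times> (bool list \<Rightarrow> nat set \<Rightarrow> real)"

definition oneway_protocol_exists ::
  "nat \<Rightarrow> real \<Rightarrow> (nat set \<Rightarrow> nat set \<Rightarrow> real) \<Rightarrow> nat \<Rightarrow> bool" where
  "oneway_protocol_exists n \<delta> g k \<longleftrightarrow>
     (\<exists>p :: det_oneway pmf.
        (\<forall>P\<in>set_pmf p. \<forall>x. x \<subseteq> {..<n} \<longrightarrow> length (fst P x) \<le> k) \<and>
        (\<forall>x y. x \<subseteq> {..<n} \<and> y \<subseteq> {..<n} \<longrightarrow>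
            measure_pmf.prob p {P. snd P (fst P x) y = g x y} \<ge> 1 - \<delta>))"

definition R_oneway :: "nat \<Rightarrow> real \<Rightarrow> (nat set \<Rightarrow> nat set \<Rightarrow> real) \<Rightarrow> nat" where
  "R_oneway n \<delta> g = (LEAST k. oneway_protocol_exists n \<delta> g k)"

definition xor_function :: "(nat set \<Rightarrow> real) \<Rightarrow> nat set \<Rightarrow> nat set \<Rightarrow> real" where
  "xor_function f x y = f (xor_set x y)"

end

theory Submission
  imports Defs
begin


lemma arith_aux: assumes "(C::nat) + k = C' + (3 - k)" "k \<le> 3" shows "k = (C' + 3 - C) div 2"
proof -
  have "C' + 3 - C = 2 * k" using assms by linarith
  then show ?thesis by simp
qed


lemma choose3_le: "(3::nat) choose j \<le> 3"
proof -
  have "j \<le> 3 \<or> j > 3" by auto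
  moreover have "j > 3 \<Longrightarrow> ?thesis" by (simp add: binomial_eq_0)
  moreover have "j \<le> 3 \<Longrightarrow> ?thesis"
    by (cases j; cases "j - 1"; cases "j - 2"; auto simp: numeral_3_eq_3)
  ultimately show ?thesis by blast
qed

lemma inner_count:
  assumes "finite T0" "card T0 = 3" "w \<subseteq> T0"
  shows "card {T \<in> Pow T0. card (xor_set w T) = j} \<le> 3"
proof -
  have "bij_betw (xor_set w) {T \<in> Pow T0. card (xor_set w T) = j} {S. S \<subseteq> T0 \<and> card S = j}"
  proof (rule bij_betw_byWitness[where f'="xor_set w"])
    show "\<forall>a\<in>{T \<in> Pow T0. card (xor_set w T) = j}. xor_set w (xor_set w a) = a"
      by (auto simp: xor_set_def)
    show "\<forall>a'\<in>{S. S \<subseteq> T0 \<and> card S = j}. xor_set w (xor_set w a') = a'"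
      by (auto simp: xor_set_def)
    show "xor_set w ` {T \<in> Pow T0. card (xor_set w T) = j} \<subseteq> {S. S \<subseteq> T0 \<and> card S = j}"
      using assms by (auto simp: xor_set_def)
    show "xor_set w ` {S. S \<subseteq> T0 \<and> card S = j} \<subseteq> {T \<in> Pow T0. card (xor_set w T) = j}"
    proof
      fix T assume "T \<in> xor_set w ` {S. S \<subseteq> T0 \<and> card S = j}"
      then obtain S where S: "S \<subseteq> T0" "card S = j" "T = xor_set w S" by auto
      have "xor_set w T = S" using S by (auto simp: xor_set_def)
      then show "T \<in> {T \<in> Pow T0. card (xor_set w T) = j}" using S assms by (auto simp: xor_set_def)
    qed
  qed
  then have "card {T \<in> Pow T0. card (xor_set w T) = j} = card {S. S \<subseteq> T0 \<and> card S = j}"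
    by (rule bij_betw_same_card)
  also have "\<dots> = 3 choose j" using n_subsets[OF assms(1)] assms(2) by simp
  finally show ?thesis using choose3_le by simp
qed


lemma xor_split:
  assumes "z \<inter> T0 = {}" "T \<subseteq> T0" "finite x" "finite z" "finite T0"
  shows "card (xor_set x (z \<union> T)) = card (xor_set x z - T0) + card (xor_set (x \<inter> T0) T)"
proof -
  have "xor_set x (z \<union> T) = (xor_set x z - T0) \<union> xor_set (x \<inter> T0) T"
    using assms(1,2) by (auto simp: xor_set_def)
  moreover have "(xor_set x z - T0) \<inter> xor_set (x \<inter> T0) T = {}"
    using assms(2) by (auto simp: xor_set_def)
  moreover have "finite (xor_set x z - T0)" "finite (xor_set (x \<inter> T0) T)"
    using assms finite_subset by (auto simp: xor_set_def)
  ultimately show ?thesis by (simp add: card_Un_disjoint)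
qed

lemma coll_count:
  assumes U: "finite U" and xU: "x \<subseteq> U" and x'U: "x' \<subseteq> U"
    and abc: "a \<in> xor_set x x'" "b \<in> xor_set x x'" "c \<in> xor_set x x'"
    and dist: "a \<noteq> b" "a \<noteq> c" "b \<noteq> c"
  shows "8 * card {y \<in> Pow U. card (xor_set x y) = card (xor_set x' y)} \<le> 3 * 2 ^ card U"
proof -
  define T0 where "T0 = {a, b, c}"
  define V where "V = U - T0"
  define P where "P = (\<lambda>y. card (xor_set x y) = card (xor_set x' y))"
  have T0U: "T0 \<subseteq> U" using abc xU x'U by (auto simp: T0_def xor_set_def)
  have fT0: "finite T0" and cT0: "card T0 = 3" using dist by (auto simp: T0_def)
  have fV: "finite V" using U by (simp add: V_def)
  have cV: "card V = card U - 3" using cT0 T0U U fT0 by (simp add: V_def card_Diff_subset)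
  have T0D: "T0 \<subseteq> xor_set x x'" using abc by (auto simp: T0_def)
  have fx: "finite x" "finite x'" using xU x'U U finite_subset by auto
  define w where "w = x \<inter> T0"
  have w: "w \<subseteq> T0" by (auto simp: w_def)
  have x'T0: "x' \<inter> T0 = T0 - w" using T0D by (auto simp: w_def xor_set_def)
  have inner: "card {T \<in> Pow T0. P (z \<union> T)} \<le> 3" if z: "z \<in> Pow V" for z
  proof -
    have zT: "z \<inter> T0 = {}" "finite z" using z fV finite_subset by (auto simp: V_def)
    define C where "C = card (xor_set x z - T0)"
    define C' where "C' = card (xor_set x' z - T0)"
    have key: "P (z \<union> T) \<Longrightarrow> card (xor_set w T) = (C' + 3 - C) div 2" if T: "T \<subseteq> T0" for T
    proof -
      assume PT: "P (z \<union> T)"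
      have e1: "card (xor_set x (z \<union> T)) = C + card (xor_set w T)"
        using xor_split[OF zT(1) T fx(1) zT(2) fT0] by (simp add: C_def w_def)
      have e2: "card (xor_set x' (z \<union> T)) = C' + card (xor_set (T0 - w) T)"
        using xor_split[OF zT(1) T fx(2) zT(2) fT0] x'T0 by (simp add: C'_def)
      have d: "xor_set (T0 - w) T = T0 - xor_set w T" using T w by (auto simp: xor_set_def)
      have sub: "xor_set w T \<subseteq> T0" using T w by (auto simp: xor_set_def)
      have le3: "card (xor_set w T) \<le> 3" using card_mono[OF fT0 sub] cT0 by simp
      have "card (T0 - xor_set w T) = card T0 - card (xor_set w T)"
        by (rule card_Diff_subset[OF finite_subset[OF sub fT0] sub])
      then have e3: "card (xor_set (T0 - w) T) = 3 - card (xor_set w T)" unfolding d cT0 .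
      have PT': "card (xor_set x (z \<union> T)) = card (xor_set x' (z \<union> T))" using PT unfolding P_def .
      have "C + card (xor_set w T) = C' + (3 - card (xor_set w T))"
        using PT' unfolding e1 e2 e3 .
      then show ?thesis using le3 by (rule arith_aux)
    qed
    have "{T \<in> Pow T0. P (z \<union> T)} \<subseteq> {T \<in> Pow T0. card (xor_set w T) = (C' + 3 - C) div 2}"
      using key by auto
    then have "card {T \<in> Pow T0. P (z \<union> T)} \<le> card {T \<in> Pow T0. card (xor_set w T) = (C' + 3 - C) div 2}"
      by (rule card_mono[rotated]) (simp add: fT0)
    also have "\<dots> \<le> 3" by (rule inner_count[OF fT0 cT0 w])
    finally show ?thesis .
  qed
  have eqset: "{y \<in> Pow U. P y} = (\<lambda>(z, T). z \<union> T) ` (SIGMA z:Pow V. {T \<in> Pow T0. P (z \<union> T)})"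
  proof
    show "{y \<in> Pow U. P y} \<subseteq> (\<lambda>(z, T). z \<union> T) ` (SIGMA z:Pow V. {T \<in> Pow T0. P (z \<union> T)})"
    proof
      fix y assume y: "y \<in> {y \<in> Pow U. P y}"
      have "y = (y - T0) \<union> (y \<inter> T0)" by auto
      moreover have "(y - T0, y \<inter> T0) \<in> (SIGMA z:Pow V. {T \<in> Pow T0. P (z \<union> T)})"
      proof -
        have "y - T0 \<in> Pow V" "y \<inter> T0 \<in> Pow T0" using y by (auto simp: V_def)
        moreover have "P ((y - T0) \<union> (y \<inter> T0))" using y by (simp add: Un_Diff_Int)
        ultimately show ?thesis by simp
      qed
      ultimately show "y \<in> (\<lambda>(z, T). z \<union> T) ` (SIGMA z:Pow V. {T \<in> Pow T0. P (z \<union> T)})"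
        by - (rule image_eqI[where x="(y - T0, y \<inter> T0)"], simp_all)
    qed
    show "(\<lambda>(z, T). z \<union> T) ` (SIGMA z:Pow V. {T \<in> Pow T0. P (z \<union> T)}) \<subseteq> {y \<in> Pow U. P y}"
      using T0U by (auto simp: V_def)
  qed
  have inj: "inj_on (\<lambda>(z, T). z \<union> T) (SIGMA z:Pow V. {T \<in> Pow T0. P (z \<union> T)})"
  proof (rule inj_onI, clarsimp)
    fix z T z' T'
    assume "z \<subseteq> V" "T \<subseteq> T0" "z' \<subseteq> V" "T' \<subseteq> T0" "z \<union> T = z' \<union> T'"
    then have "z = (z \<union> T) - T0" "z' = (z' \<union> T') - T0" "T = (z \<union> T) \<inter> T0" "T' = (z' \<union> T') \<inter> T0"
      by (auto simp: V_def)
    then show "z = z' \<and> T = T'" using \<open>z \<union> T = z' \<union> T'\<close> by metis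
  qed
  have "card {y \<in> Pow U. P y} = card (SIGMA z:Pow V. {T \<in> Pow T0. P (z \<union> T)})"
    unfolding eqset using inj by (rule card_image)
  also have "\<dots> = (\<Sum>z\<in>Pow V. card {T \<in> Pow T0. P (z \<union> T)})"
    using fV fT0 by (simp add: card_SigmaI)
  also have "\<dots> \<le> (\<Sum>z\<in>Pow V. 3)" by (rule sum_mono) (rule inner)
  also have "\<dots> = 3 * 2 ^ (card U - 3)" using fV cV by (simp add: card_Pow)
  finally have "8 * card {y \<in> Pow U. P y} \<le> 8 * (3 * 2 ^ (card U - 3))" by simp
  also have "\<dots> = 3 * 2 ^ card U"
  proof -
    have "card U \<ge> 3" using cT0 T0U U card_mono by metis
    then have "card U = 3 + (card U - 3)" by simp
    then have "(2::nat) ^ card U = 2 ^ 3 * 2 ^ (card U - 3)" by (metis power_add)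
    then show ?thesis by simp
  qed
  finally show ?thesis by (simp add: P_def)
qed



lemma alg_aux:
  fixes a c s :: real
  assumes c: "c \<ge> 0" and s: "s \<ge> 0" and h: "a\<^sup>2 \<le> c\<^sup>2 * (s + 3/8 * s\<^sup>2)"
  shows "a \<le> c * (5/8 * s + 1)"
proof (rule ccontr)
  define b where "b = c * (5/8 * s + 1)"
  assume "\<not> a \<le> c * (5/8 * s + 1)"
  then have ab: "a > b" by (simp add: b_def)
  have b0: "b \<ge> 0" using c s by (simp add: b_def)
  have "b\<^sup>2 < a\<^sup>2" using ab b0 by (simp add: power_strict_mono)
  moreover have "c\<^sup>2 * (s + 3/8 * s\<^sup>2) \<le> b\<^sup>2"
  proof -
    have "b\<^sup>2 - c\<^sup>2 * (s + 3/8 * s\<^sup>2) = c\<^sup>2 * (s\<^sup>2/64 + s/4 + 1)"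
      by (simp add: b_def power2_eq_square algebra_simps)
    also have "\<dots> \<ge> 0" using s by simp
    finally show ?thesis by simp
  qed
  ultimately show False using h by simp
qed

lemma part_bound:
  fixes S Y :: "nat set set" and h :: "nat set \<Rightarrow> real" and g :: "nat set \<Rightarrow> nat set \<Rightarrow> real"
  assumes fS: "finite S" and fY: "finite Y"
    and coll: "\<And>x x'. x \<in> S \<Longrightarrow> x' \<in> S \<Longrightarrow> x \<noteq> x' \<Longrightarrow>
       8 * (\<Sum>y\<in>Y. of_bool (g x y = g x' y)) \<le> 3 * real (card Y)"
  shows "(\<Sum>x\<in>S. \<Sum>y\<in>Y. of_bool (h y = g x y) :: real) \<le> real (card Y) * (5/8 * real (card S) + 1)"
proof -
  define N where "N y = (\<Sum>x\<in>S. of_bool (h y = g x y) :: real)" for y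
  define cY where "cY = real (card Y)"
  define s where "s = real (card S)"
  have a_eq: "(\<Sum>x\<in>S. \<Sum>y\<in>Y. of_bool (h y = g x y) :: real) = (\<Sum>y\<in>Y. N y)"
    unfolding N_def by (rule sum.swap)
  have sq: "(N y)\<^sup>2 \<le> (\<Sum>x\<in>S. \<Sum>x'\<in>S. of_bool (g x y = g x' y))" for y
  proof -
    have "(N y)\<^sup>2 = (\<Sum>x\<in>S. \<Sum>x'\<in>S. of_bool (h y = g x y) * of_bool (h y = g x' y))"
      by (simp add: N_def power2_eq_square sum_product)
    also have "\<dots> \<le> (\<Sum>x\<in>S. \<Sum>x'\<in>S. of_bool (g x y = g x' y))"
      by (intro sum_mono) auto
    finally show ?thesis .
  qed
  have bnd: "(\<Sum>y\<in>Y. of_bool (g x y = g x' y)) \<le> (if x' = x then cY else 0) + 3/8 * cY"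
    if "x \<in> S" "x' \<in> S" for x x'
  proof (cases "x' = x")
    case True
    then show ?thesis by (simp add: cY_def)
  next
    case False
    then show ?thesis using coll[OF that] by (simp add: cY_def)
  qed
  have "(\<Sum>y\<in>Y. (N y)\<^sup>2) \<le> (\<Sum>y\<in>Y. \<Sum>x\<in>S. \<Sum>x'\<in>S. of_bool (g x y = g x' y))"
    by (intro sum_mono sq)
  also have "\<dots> = (\<Sum>x\<in>S. \<Sum>x'\<in>S. \<Sum>y\<in>Y. of_bool (g x y = g x' y))"
  proof -
    have "(\<Sum>y\<in>Y. \<Sum>x\<in>S. \<Sum>x'\<in>S. of_bool (g x y = g x' y) :: real)
        = (\<Sum>x\<in>S. \<Sum>y\<in>Y. \<Sum>x'\<in>S. of_bool (g x y = g x' y))"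
      by (rule sum.swap)
    also have "\<dots> = (\<Sum>x\<in>S. \<Sum>x'\<in>S. \<Sum>y\<in>Y. of_bool (g x y = g x' y))"
      by (intro sum.cong refl sum.swap)
    finally show ?thesis .
  qed
  also have "\<dots> \<le> (\<Sum>x\<in>S. \<Sum>x'\<in>S. (if x' = x then cY else 0) + 3/8 * cY)"
    by (intro sum_mono bnd)
  also have "\<dots> = (\<Sum>x\<in>S. cY + s * (3/8 * cY))"
    using fS by (intro sum.cong refl) (simp add: sum.distrib s_def)
  also have "\<dots> = cY * (s + 3/8 * s\<^sup>2)"
    by (simp add: s_def power2_eq_square algebra_simps)
  finally have sN: "(\<Sum>y\<in>Y. (N y)\<^sup>2) \<le> cY * (s + 3/8 * s\<^sup>2)" .
  have "(\<Sum>y\<in>Y. N y)\<^sup>2 \<le> (\<Sum>y\<in>Y. (N y)\<^sup>2) * cY"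
    unfolding cY_def by (rule sum_squared_le_sum_of_squares)
  also have "\<dots> \<le> cY * (s + 3/8 * s\<^sup>2) * cY"
    using sN by (intro mult_right_mono) (auto simp: cY_def)
  finally have "(\<Sum>y\<in>Y. N y)\<^sup>2 \<le> cY\<^sup>2 * (s + 3/8 * s\<^sup>2)"
    by (simp add: power2_eq_square algebra_simps)
  then have "(\<Sum>y\<in>Y. N y) \<le> cY * (5/8 * s + 1)"
    by (rule alg_aux[rotated 2]) (auto simp: cY_def s_def)
  then show ?thesis using a_eq by (simp add: cY_def s_def)
qed


lemma det_bound:
  fixes X Y :: "nat set set" and A :: "nat set \<Rightarrow> bool list" and B :: "bool list \<Rightarrow> nat set \<Rightarrow> real"
    and g :: "nat set \<Rightarrow> nat set \<Rightarrow> real"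
  assumes fX: "finite X" and fY: "finite Y"
    and coll: "\<And>x x'. x \<in> X \<Longrightarrow> x' \<in> X \<Longrightarrow> x \<noteq> x' \<Longrightarrow>
       8 * (\<Sum>y\<in>Y. of_bool (g x y = g x' y)) \<le> 3 * real (card Y)"
  shows "(\<Sum>x\<in>X. \<Sum>y\<in>Y. of_bool (B (A x) y = g x y) :: real)
           \<le> real (card Y) * (5/8 * real (card X) + real (card (A ` X)))"
proof -
  define F where "F x = (\<Sum>y\<in>Y. of_bool (B (A x) y = g x y) :: real)" for x
  define S where "S m = {x. x \<in> X \<and> A x = m}" for m
  have fS: "finite (S m)" for m using fX by (simp add: S_def)
  have "(\<Sum>x\<in>X. F x) = (\<Sum>m\<in>A ` X. \<Sum>x\<in>S m. F x)"
    unfolding S_def by (rule sum.image_gen[OF fX])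
  also have "\<dots> \<le> (\<Sum>m\<in>A ` X. real (card Y) * (5/8 * real (card (S m)) + 1))"
  proof (rule sum_mono)
    fix m assume "m \<in> A ` X"
    have "(\<Sum>x\<in>S m. F x) = (\<Sum>x\<in>S m. \<Sum>y\<in>Y. of_bool (B m y = g x y))"
      by (intro sum.cong refl) (simp add: F_def S_def)
    also have "\<dots> \<le> real (card Y) * (5/8 * real (card (S m)) + 1)"
      by (rule part_bound[OF fS fY]) (auto simp: S_def intro: coll)
    finally show "(\<Sum>x\<in>S m. F x) \<le> real (card Y) * (5/8 * real (card (S m)) + 1)" .
  qed
  also have "\<dots> = real (card Y) * (5/8 * (\<Sum>m\<in>A ` X. real (card (S m))) + real (card (A ` X)))"
    by (simp add: sum_distrib_left sum.distrib algebra_simps)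
  also have "(\<Sum>m\<in>A ` X. real (card (S m))) = real (card X)"
  proof -
    have "real (card X) = (\<Sum>x\<in>X. 1)" by simp
    also have "\<dots> = (\<Sum>m\<in>A ` X. \<Sum>x\<in>S m. 1)"
      unfolding S_def by (rule sum.image_gen[OF fX])
    finally show ?thesis by simp
  qed
  finally show ?thesis by (simp add: F_def)
qed


lemma prob_as_int: "measure_pmf.prob p {P. Q P} = measure_pmf.expectation p (\<lambda>P. of_bool (Q P) :: real)"
proof -
  have "measure_pmf.expectation p (indicator {P. Q P} :: _ \<Rightarrow> real) = measure_pmf.prob p {P. Q P}"
    by (simp add: integral_indicator)
  moreover have "(indicator {P. Q P} :: _ \<Rightarrow> real) = (\<lambda>P. of_bool (Q P))"
    by (auto simp: indicator_def)
  ultimately show ?thesis by simp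
qed

lemma int_ob: "integrable (measure_pmf p) (\<lambda>P. of_bool (Q P) :: real)"
  by (rule measure_pmf.integrable_const_bound[where B=1]) auto

lemma avg_exists:
  fixes p :: "'a pmf" and Q :: "'b \<Rightarrow> 'a \<Rightarrow> bool" and Z :: "'b set"
  assumes fZ: "finite Z" and nZ: "Z \<noteq> {}" and h: "\<And>z. z \<in> Z \<Longrightarrow> measure_pmf.prob p {P. Q z P} \<ge> 2/3"
  shows "\<exists>P\<in>set_pmf p. (\<Sum>z\<in>Z. of_bool (Q z P) :: real) > 13/20 * real (card Z)"
proof (rule ccontr)
  assume "\<not> ?thesis"
  then have le: "\<And>P. P \<in> set_pmf p \<Longrightarrow> (\<Sum>z\<in>Z. of_bool (Q z P) :: real) \<le> 13/20 * real (card Z)"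
    by (auto simp: not_less)
  have cZ: "real (card Z) > 0" using fZ nZ by (simp add: card_gt_0_iff)
  have "2/3 * real (card Z) = (\<Sum>z\<in>Z. 2/3)" by simp
  also have "\<dots> \<le> (\<Sum>z\<in>Z. measure_pmf.prob p {P. Q z P})" by (intro sum_mono h)
  also have "\<dots> = (\<Sum>z\<in>Z. measure_pmf.expectation p (\<lambda>P. of_bool (Q z P) :: real))"
    by (simp add: prob_as_int)
  also have "\<dots> = measure_pmf.expectation p (\<lambda>P. \<Sum>z\<in>Z. of_bool (Q z P) :: real)"
    by (rule Bochner_Integration.integral_sum[where I=Z and M="measure_pmf p" and f="\<lambda>z P. of_bool (Q z P) :: real", symmetric]) (rule int_ob)
  also have "\<dots> \<le> 13/20 * real (card Z)"
  proof (rule measure_pmf.integral_le_const)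
    show "integrable (measure_pmf p) (\<lambda>P. \<Sum>z\<in>Z. of_bool (Q z P) :: real)"
      by (rule Bochner_Integration.integrable_sum) (rule int_ob)
    show "AE x in measure_pmf p. (\<Sum>z\<in>Z. of_bool (Q z x) :: real) \<le> 13 / 20 * real (card Z)"
      by (rule AE_pmfI) (rule le)
  qed
  finally show False using cZ by simp
qed


definition fn :: "nat \<Rightarrow> nat set \<Rightarrow> real" where
  "fn n S = real (card S) / real n"

lemma pow_sum_less: "(\<Sum>i\<le>k. (2::nat) ^ i) < 2 ^ Suc k"
  by (induction k) auto

lemma msg_count:
  assumes "\<And>x. x \<in> X \<Longrightarrow> length (A x) \<le> k"
  shows "card ((A :: nat set \<Rightarrow> bool list) ` X) < 2 ^ Suc k"
proof -
  have "A ` X \<subseteq> {xs. set xs \<subseteq> UNIV \<and> length xs \<le> k}" using assms by auto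
  then have "card (A ` X) \<le> card {xs :: bool list. set xs \<subseteq> UNIV \<and> length xs \<le> k}"
    by (rule card_mono[rotated]) (rule finite_lists_length_le, simp)
  also have "\<dots> = (\<Sum>i\<le>k. 2 ^ i)" using card_lists_length_le[of "UNIV :: bool set" k] by simp
  finally show ?thesis using pow_sum_less[of k] by linarith
qed

lemma lower_bound:
  assumes n: "n > 0" and prot: "oneway_protocol_exists n (1/3) (xor_function (fn n)) k"
  shows "n div 3 \<le> k + 6"
proof -
  define L where "L = n div 3"
  define U where "U = {..<n}"
  define rep where "rep z = {i. i < 3 * L \<and> i div 3 \<in> z}" for z :: "nat set"
  define X where "X = rep ` Pow {..<L}"
  define Y where "Y = Pow U"
  define g where "g = xor_function (fn n)"
  have g_eq: "g x y = g x' y \<longleftrightarrow> card (xor_set x y) = card (xor_set x' y)" for x x' y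
    using n by (simp add: g_def xor_function_def fn_def)
  have fU: "finite U" and cU: "card U = n" by (simp_all add: U_def)
  have rep_mem: "3 * j + r \<in> rep z \<longleftrightarrow> j \<in> z" if "j < L" "r < 3" for j r z
    using that by (auto simp: rep_def)
  have inj: "inj_on rep (Pow {..<L})"
  proof (rule inj_onI)
    fix z z' assume z: "z \<in> Pow {..<L}" "z' \<in> Pow {..<L}" and e: "rep z = rep z'"
    show "z = z'"
    proof (rule set_eqI)
      fix j show "j \<in> z \<longleftrightarrow> j \<in> z'"
      proof (cases "j < L")
        case True then show ?thesis using rep_mem[of j 0 z] rep_mem[of j 0 z'] e by simp
      next
        case False then show ?thesis using z by auto
      qed
    qed
  qed
  have cX: "card X = 2 ^ L" unfolding X_def by (simp add: card_image[OF inj] card_Pow)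
  have fX: "finite X" and fY: "finite Y" by (simp_all add: X_def Y_def U_def)
  have XU: "x \<subseteq> U" if "x \<in> X" for x using that by (auto simp: X_def rep_def U_def L_def)
  have coll: "8 * (\<Sum>y\<in>Y. of_bool (g x y = g x' y)) \<le> 3 * real (card Y)"
    if xX: "x \<in> X" and x'X: "x' \<in> X" and xx: "x \<noteq> x'" for x x'
  proof -
    obtain z where z1: "z \<subseteq> {..<L}" "x = rep z" using xX unfolding X_def by auto
    obtain z' where z2: "z' \<subseteq> {..<L}" "x' = rep z'" using x'X unfolding X_def by auto
    have z: "z \<subseteq> {..<L}" "z' \<subseteq> {..<L}" "x = rep z" "x' = rep z'" using z1 z2 by auto
    have "z \<noteq> z'" using z xx by auto
    then obtain j where j: "j \<in> xor_set z z'" by (auto simp: xor_set_def)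
    have jL: "j < L" using j z by (auto simp: xor_set_def)
    have mem: "3 * j + r \<in> xor_set x x'" if "r < 3" for r
      using rep_mem[OF jL that, of z] rep_mem[OF jL that, of z'] j z(3,4) by (auto simp: xor_set_def)
    have "8 * card {y \<in> Pow U. card (xor_set x y) = card (xor_set x' y)} \<le> 3 * 2 ^ card U"
      by (rule coll_count[OF fU XU[OF xX] XU[OF x'X] mem[of 0] mem[of 1] mem[of 2]]) auto
    moreover have "(\<Sum>y\<in>Y. of_bool (g x y = g x' y) :: real)
        = real (card {y \<in> Pow U. card (xor_set x y) = card (xor_set x' y)})"
      using fY by (simp add: sum_of_bool_eq g_eq Y_def Int_def)
    moreover have "card Y = 2 ^ card U" using fU by (simp add: Y_def card_Pow)
    ultimately show ?thesis
      by (metis (mono_tags, lifting) of_nat_le_iff of_nat_mult of_nat_numeral)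
  qed
  from prot obtain p :: "det_oneway pmf" where
    len: "\<forall>P\<in>set_pmf p. \<forall>x. x \<subseteq> {..<n} \<longrightarrow> length (fst P x) \<le> k" and
    cor: "\<forall>x y. x \<subseteq> {..<n} \<and> y \<subseteq> {..<n} \<longrightarrow>
            measure_pmf.prob p {P. snd P (fst P x) y = g x y} \<ge> 1 - 1/3"
    unfolding oneway_protocol_exists_def g_def by blast
  have nXY: "X \<times> Y \<noteq> {}" by (auto simp: X_def Y_def)
  have "\<exists>P\<in>set_pmf p. (\<Sum>xy\<in>X \<times> Y. of_bool ((\<lambda>xy P. snd P (fst P (fst xy)) (snd xy) = g (fst xy) (snd xy)) xy P) :: real)
          > 13/20 * real (card (X \<times> Y))"
  proof (rule avg_exists)
    show "finite (X \<times> Y)" using fX fY by simp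
    show "X \<times> Y \<noteq> {}" by (rule nXY)
    fix xy assume "xy \<in> X \<times> Y"
    then have "fst xy \<subseteq> {..<n}" "snd xy \<subseteq> {..<n}" using XU unfolding Y_def U_def by (force, force)
    then show "measure_pmf.prob p {P. snd P (fst P (fst xy)) (snd xy) = g (fst xy) (snd xy)} \<ge> 2/3"
      using cor by auto
  qed
  then obtain P where P: "P \<in> set_pmf p"
    and big: "(\<Sum>xy\<in>X \<times> Y. of_bool (snd P (fst P (fst xy)) (snd xy) = g (fst xy) (snd xy)) :: real)
          > 13/20 * real (card (X \<times> Y))" by auto
  have "(\<Sum>xy\<in>X \<times> Y. of_bool (snd P (fst P (fst xy)) (snd xy) = g (fst xy) (snd xy)) :: real)
      = (\<Sum>x\<in>X. \<Sum>y\<in>Y. of_bool (snd P (fst P x) y = g x y))"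
    by (simp add: sum.cartesian_product case_prod_beta)
  also have "\<dots> \<le> real (card Y) * (5/8 * real (card X) + real (card (fst P ` X)))"
    by (rule det_bound[OF fX fY coll])
  finally have "13/20 * (real (card X) * real (card Y)) < real (card Y) * (5/8 * real (card X) + real (card (fst P ` X)))"
    using big by (simp add: card_cartesian_product)
  then have "real (card Y) * (real (card X) / 40 - real (card (fst P ` X))) < 0"
    by (simp add: algebra_simps)
  moreover have "real (card Y) > 0" using fY by (auto simp: Y_def card_gt_0_iff)
  ultimately have "real (card X) / 40 - real (card (fst P ` X)) < 0"
    by (simp add: mult_less_0_iff)
  then have "real (card X) < 40 * real (card (fst P ` X))" by simp
  moreover have "card (fst P ` X) < 2 ^ Suc k"
    using len P XU by (intro msg_count) (auto simp: U_def)
  ultimately have "(2::nat) ^ L < 40 * 2 ^ Suc k" using cX by linarith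
  also have "\<dots> < 2 ^ (Suc k + 6)" by (simp add: power_add)
  finally have "L < Suc k + 6" by (rule power_less_imp_less_exp[rotated]) simp
  then show ?thesis by (simp add: L_def)
qed


lemma trivial_prot: "oneway_protocol_exists n (1/3) g n"
proof -
  define enc where "enc x = map (\<lambda>i. i \<in> x) [0..<n]" for x :: "nat set"
  define dec where "dec m y = g {i. i < length m \<and> m ! i} y" for m y
  have de: "{i. i < length (enc x) \<and> enc x ! i} = x" if "x \<subseteq> {..<n}" for x
    using that by (auto simp: enc_def)
  show ?thesis unfolding oneway_protocol_exists_def
  proof (rule exI[where x="return_pmf (enc, dec)"], intro conjI allI impI ballI)
    fix P x assume "P \<in> set_pmf (return_pmf (enc, dec))" "x \<subseteq> {..<n}"
    then show "length (fst P x) \<le> n" by (simp add: enc_def)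
  next
    fix x y assume xy: "x \<subseteq> {..<n} \<and> y \<subseteq> {..<n}"
    then have "snd (enc, dec) (fst (enc, dec) x) y = g x y" using de by (simp add: dec_def)
    then show "1 - 1/3 \<le> measure_pmf.prob (return_pmf (enc, dec)) {P. snd P (fst P x) y = g x y}"
      by (simp add: measure_return_pmf indicator_def)
  qed
qed

theorem mainTheorem12:
  shows "\<exists>c1 c2 :: real. c1 > 0 \<and> c2 > 0 \<and>
    (\<exists>N::nat. \<forall>n\<ge>N. \<exists>f :: nat set \<Rightarrow> real.
       monotone_setfun n f \<and>
       (\<forall>S. S \<subseteq> {..<n} \<longrightarrow> 0 \<le> f S \<and> f S \<le> 1) \<and>
       lipschitz_setfun n (c1 / real n) f \<and>
       submodular_setfun n f \<and>
       (\<exists>I t. is_matroid n I \<and> t > 0 \<and>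
          (\<forall>S. S \<subseteq> {..<n} \<longrightarrow> f S = t * real (matroid_rank I S))) \<and>
       real (R_oneway n (1/3) (xor_function f)) \<ge> c2 * real n)"
proof (rule exI[where x=1], rule exI[where x="1/6"], intro conjI)
  show "(1::real) > 0" "(1/6::real) > 0" by simp_all
  show "\<exists>N::nat. \<forall>n\<ge>N. \<exists>f :: nat set \<Rightarrow> real.
       monotone_setfun n f \<and>
       (\<forall>S. S \<subseteq> {..<n} \<longrightarrow> 0 \<le> f S \<and> f S \<le> 1) \<and>
       lipschitz_setfun n (1 / real n) f \<and>
       submodular_setfun n f \<and>
       (\<exists>I t. is_matroid n I \<and> t > 0 \<and>
          (\<forall>S. S \<subseteq> {..<n} \<longrightarrow> f S = t * real (matroid_rank I S))) \<and>
       real (R_oneway n (1/3) (xor_function f)) \<ge> 1/6 * real n"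
  proof (rule exI[where x=42], intro allI impI)
  fix n :: nat assume n42: "42 \<le> n"
  then have n: "n > 0" by simp
  have rn: "real n > 0" using n by simp
  define f where "f = fn n"
  have fin: "finite S" if "S \<subseteq> {..<n}" for S using that finite_subset by blast
  show "\<exists>f. monotone_setfun n f \<and>
       (\<forall>S. S \<subseteq> {..<n} \<longrightarrow> 0 \<le> f S \<and> f S \<le> 1) \<and>
       lipschitz_setfun n (1 / real n) f \<and>
       submodular_setfun n f \<and>
       (\<exists>I t. is_matroid n I \<and> t > 0 \<and>
          (\<forall>S. S \<subseteq> {..<n} \<longrightarrow> f S = t * real (matroid_rank I S))) \<and>
       1/6 * real n \<le> real (R_oneway n (1/3) (xor_function f))"
  proof (intro exI[where x=f] conjI)
    show "monotone_setfun n f"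
      unfolding monotone_setfun_def
    proof (intro allI impI)
      fix A B assume "A \<subseteq> B \<and> B \<subseteq> {..<n}"
      then have "card A \<le> card B" using fin by (meson card_mono)
      then show "f A \<le> f B" using rn by (simp add: f_def fn_def divide_right_mono)
    qed
    show "\<forall>S. S \<subseteq> {..<n} \<longrightarrow> 0 \<le> f S \<and> f S \<le> 1"
    proof (intro allI impI)
      fix S assume "S \<subseteq> {..<n}"
      then have "card S \<le> n" using card_mono[of "{..<n}" S] by simp
      then show "0 \<le> f S \<and> f S \<le> 1" using rn by (simp add: f_def fn_def)
    qed
    show "lipschitz_setfun n (1 / real n) f"
      unfolding lipschitz_setfun_def
    proof (intro allI impI)
      fix S i assume "S \<subseteq> {..<n} \<and> i < n"
      then have "finite S" using fin by blast
      then have "real (card (insert i S)) - real (card S) \<in> {0, 1}"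
        by (simp add: card_insert_if)
      then have "\<bar>real (card (insert i S)) - real (card S)\<bar> \<le> 1" by auto
      then have "\<bar>real (card (insert i S)) - real (card S)\<bar> / real n \<le> 1 / real n"
        using rn by (simp add: divide_right_mono)
      then show "\<bar>f (insert i S) - f S\<bar> \<le> 1 / real n"
        by (simp add: f_def fn_def diff_divide_distrib[symmetric] abs_divide)
    qed
    show "submodular_setfun n f"
      unfolding submodular_setfun_def
    proof (intro allI impI)
      fix A B i assume h: "A \<subseteq> B \<and> B \<subseteq> {..<n} \<and> i < n \<and> i \<notin> B"
      then have "finite A" "finite B" "i \<notin> A" using fin by auto
      then show "f (insert i A) - f A \<ge> f (insert i B) - f B"
        using h by (simp add: f_def fn_def diff_divide_distrib[symmetric])
    qed
    show "\<exists>I t. is_matroid n I \<and> t > 0 \<and>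
          (\<forall>S. S \<subseteq> {..<n} \<longrightarrow> f S = t * real (matroid_rank I S))"
    proof (intro exI[where x="Pow {..<n}"] exI[where x="1 / real n"] conjI allI impI)
      show "is_matroid n (Pow {..<n})"
        unfolding is_matroid_def
      proof (intro conjI allI impI ballI)
        fix J K assume h: "J \<in> Pow {..<n} \<and> K \<in> Pow {..<n} \<and> card J < card K"
        then have "\<not> K \<subseteq> J" using fin card_mono by (metis PowD not_le)
        then obtain e where "e \<in> K - J" by auto
        then show "\<exists>e\<in>K - J. insert e J \<in> Pow {..<n}" using h by auto
      qed auto
      show "1 / real n > 0" using rn by simp
      fix S assume S: "S \<subseteq> {..<n}"
      have "matroid_rank (Pow {..<n}) S = card S"
        unfolding matroid_rank_def
      proof (rule Max_eqI)
        have "{card J |J. J \<subseteq> S \<and> J \<in> Pow {..<n}} \<subseteq> card ` Pow S" by auto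
        then show "finite {card J |J. J \<subseteq> S \<and> J \<in> Pow {..<n}}"
          using fin[OF S] by (meson finite_Pow_iff finite_imageI finite_subset)
        show "card S \<in> {card J |J. J \<subseteq> S \<and> J \<in> Pow {..<n}}" using S by auto
        fix y assume "y \<in> {card J |J. J \<subseteq> S \<and> J \<in> Pow {..<n}}"
        then show "y \<le> card S" using fin[OF S] card_mono by auto
      qed
      then show "f S = 1 / real n * real (matroid_rank (Pow {..<n}) S)"
        by (simp add: f_def fn_def)
    qed
    have ex: "\<exists>k. oneway_protocol_exists n (1/3) (xor_function f) k"
      using trivial_prot by blast
    have "oneway_protocol_exists n (1/3) (xor_function f) (R_oneway n (1/3) (xor_function f))"
      unfolding R_oneway_def by (rule LeastI_ex[OF ex])
    then have "n div 3 \<le> R_oneway n (1/3) (xor_function f) + 6"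
      unfolding f_def by (rule lower_bound[OF n])
    moreover have "n \<le> 3 * (n div 3) + 2" by simp
    ultimately have "n \<le> 3 * R_oneway n (1/3) (xor_function f) + 20" by linarith
    then have "real n \<le> 3 * real (R_oneway n (1/3) (xor_function f)) + 20" by linarith
    then show "1/6 * real n \<le> real (R_oneway n (1/3) (xor_function f))" using n42 by linarith
  qed
  qed
qed

end
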